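(* Let $d\ge 2$ be an integer, $p$ a prime with $p\equiv 1\pmod d$, $t=\frac{p-1}{d}$, and $T$ a generator of $\widehat{\mathbb F_p^{\times}}$. Then for every integer $x$ with $p\nmid x$, $$p^{d-2}\,{}_{d-1}F_{d-2}\left(\left.\begin{array}{cccc}T^{t}&T^{2t}&\ldots&T^{(d-1)t}\\ {}&\epsilon&\ldots&\epsilon\end{array}\right|x\right)_p\equiv(-1)^d\,{}_{d-1}F_{d-2}\left(\left.\begin{array}{cccc}\tfrac{1}{d}&\tfrac{2}{d}&\ldots&\tfrac{d-1}{d}\\ {}&1&\ldots&1\end{array}\right|x\right)_{\mathrm{tr}(p)}\pmod p.$$
   Context: Characters are regarded as $\mathbb Z_p$-valued (their values are $(p-1)$-th roots of unity, which lie in $\mathbb Z_p$) and extended by $\chi(0)=0$; $\epsilon$ is the trivial character; the congruence means the difference lies in $p\mathbb Z_p$, with $x$ reduced mod $p$ on the left. For characters $A,B$ of $\mathbb F_p^\times$, $\binom{A}{B}:=\frac{B(-1)}{p}\sum_{y\in\mathbb F_p}A(y)\overline B(1-y)$, and Greene's function is ${}_{n+1}F_n\left(\left.\begin{array}{ccc}A_0&\ldots&A_n\\ &B_1\ldots&B_n\end{array}\right|x\right)_p:=\frac{p}{p-1}\sum_\chi\binom{A_0\chi}{\chi}\prod_{i=1}^n\binom{A_i\chi}{B_i\chi}\chi(x)$, summed over all characters $\chi$. The truncated classical series is ${}_{n+1}F_n\left(\left.\begin{array}{ccc}a_0&\ldots&a_n\\ &b_1\ldots&b_n\end{array}\right|x\right)_{\mathrm{tr}(m)}:=\sum_{k=0}^{m-1}\frac{(a_0)_k\cdots(a_n)_k}{(b_1)_k\cdots(b_n)_k\,k!}x^k$,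 where $(a)_0=1$, $(a)_k=a(a+1)\cdots(a+k-1)$. *)

theory Defs
  imports Complex_Main "HOL-Computational_Algebra.Primes" "HOL-Number_Theory.Cong"
begin

text \<open>
  The paper regards characters as Z_p-valued and works in Q_p (Greene's function
  contains the factors p/(p-1) and 1/p).  Q_p / Z_p are not available in the library,
  so we work in an arbitrary field K of characteristic 0 (type 'a) together with a
  subring Zp (playing the role of Z_p) that has exactly the properties of Z_p used to
  make sense of the statement: Zp is a local subring with maximal ideal pO and residue
  ring Z/p, and K contains p-1 distinct (p-1)-th roots of unity, all lying in Zp.
  (Q_p with Zp = Z_p is an instance.)
\<close>

definition padic_like :: "int \<Rightarrow> 'a::field_char_0 set \<Rightarrow> bool" where
  "padic_like p Zp \<longleftrightarrow>
     1 \<in> Zp \<and> (\<forall>a\<in>Zp. \<forall>b\<in>Zp. a + b \<in> Zp \<and> a - b \<in> Zp \<and> a * b \<in> Zp) \<and>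
     (\<forall>a\<in>Zp. \<exists>n::int. \<exists>c\<in>Zp. a - of_int n = of_int p * c) \<and>
     (\<forall>n::int. (\<exists>c\<in>Zp. of_int n = of_int p * c) \<longrightarrow> p dvd n) \<and>
     (\<forall>a\<in>Zp. (\<not>(\<exists>c\<in>Zp. a = of_int p * c)) \<longrightarrow> inverse a \<in> Zp) \<and>
     (\<forall>z::'a. z ^ nat (p - 1) = 1 \<longrightarrow> z \<in> Zp) \<and>
     card {z::'a. z ^ nat (p - 1) = 1} = nat (p - 1)"

definition cong_p :: "'a::field_char_0 set \<Rightarrow> int \<Rightarrow> 'a \<Rightarrow> 'a \<Rightarrow> bool" where
  "cong_p Zp p a b \<longleftrightarrow> (\<exists>c\<in>Zp. a - b = of_int p * c)"

text \<open>Multiplicative characters of F_p^*, viewed as functions on the integers that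
  depend only on the residue mod p, extended by chi(0) = 0.\<close>
definition is_char :: "int \<Rightarrow> (int \<Rightarrow> 'a::field) \<Rightarrow> bool" where
  "is_char p \<chi> \<longleftrightarrow> (\<forall>x. \<chi> x = \<chi> (x mod p)) \<and> (\<forall>x. p dvd x \<longrightarrow> \<chi> x = 0) \<and>
     \<chi> 1 = 1 \<and> (\<forall>x y. \<chi> (x * y) = \<chi> x * \<chi> y)"

definition chars :: "int \<Rightarrow> (int \<Rightarrow> 'a::field) set" where
  "chars p = {\<chi>. is_char p \<chi>}"

definition triv_char :: "int \<Rightarrow> int \<Rightarrow> 'a::field" where
  "triv_char p x = (if p dvd x then 0 else 1)"

definition char_pow :: "int \<Rightarrow> (int \<Rightarrow> 'a::field) \<Rightarrow> nat \<Rightarrow> int \<Rightarrow> 'a" where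
  "char_pow p \<chi> k x = (if p dvd x then 0 else \<chi> x ^ k)"

definition char_mult :: "(int \<Rightarrow> 'a::field) \<Rightarrow> (int \<Rightarrow> 'a) \<Rightarrow> int \<Rightarrow> 'a" where
  "char_mult A B x = A x * B x"

definition char_generator :: "int \<Rightarrow> (int \<Rightarrow> 'a::field) \<Rightarrow> bool" where
  "char_generator p T \<longleftrightarrow> is_char p T \<and> (\<forall>\<chi>. is_char p \<chi> \<longrightarrow> (\<exists>k. \<chi> = char_pow p T k))"

text \<open>Greene's binomial coefficient (A over B) = B(-1)/p * sum_y A(y) conj(B)(1-y);
  conj(B)(z) = inverse (B z) (inverse 0 = 0 handles the extension by 0).\<close>
definition gbinom :: "int \<Rightarrow> (int \<Rightarrow> 'a::field) \<Rightarrow> (int \<Rightarrow> 'a) \<Rightarrow> 'a" where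
  "gbinom p A B = B (-1) / of_int p * (\<Sum>y\<in>{0..<p}. A y * inverse (B (1 - y)))"

text \<open>Greene's function  n+1 F n (A0, A_1..A_n; B_1..B_n | x)_p, with the lists
  As = [A_1,...,A_n] and Bs = [B_1,...,B_n].\<close>
definition greene :: "int \<Rightarrow> (int \<Rightarrow> 'a::field) \<Rightarrow> (int \<Rightarrow> 'a) list \<Rightarrow> (int \<Rightarrow> 'a) list
    \<Rightarrow> int \<Rightarrow> 'a" where
  "greene p A0 As Bs x = of_int p / of_int (p - 1) *
     (\<Sum>\<chi>\<in>chars p. gbinom p (char_mult A0 \<chi>) \<chi> *
        (\<Prod>i<length As. gbinom p (char_mult (As ! i) \<chi>) (char_mult (Bs ! i) \<chi>)) * \<chi> x)"

definition hyp_tr :: "'a::field_char_0 list \<Rightarrow> 'a list \<Rightarrow> nat \<Rightarrow> 'a \<Rightarrow> 'a" where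
  "hyp_tr as bs m x = (\<Sum>k<m. (\<Prod>a\<leftarrow>as. pochhammer a k) /
      ((\<Prod>b\<leftarrow>bs. pochhammer b k) * fact k) * x ^ k)"

end

theory Submission
  imports Defs "HOL-Number_Theory.Number_Theory"
begin


locale pl =
  fixes Zp :: "'a::field_char_0 set" and p :: int
  assumes padic: "padic_like p Zp" and prime_p: "prime p"
begin

lemma one_in: "1 \<in> Zp" using padic unfolding padic_like_def by blast
lemma add_in: "a \<in> Zp \<Longrightarrow> b \<in> Zp \<Longrightarrow> a + b \<in> Zp" using padic unfolding padic_like_def by blast
lemma diff_in: "a \<in> Zp \<Longrightarrow> b \<in> Zp \<Longrightarrow> a - b \<in> Zp" using padic unfolding padic_like_def by blast
lemma mult_in: "a \<in> Zp \<Longrightarrow> b \<in> Zp \<Longrightarrow> a * b \<in> Zp" using padic unfolding padic_like_def by blast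
lemma rep_ex: "a \<in> Zp \<Longrightarrow> \<exists>n::int. \<exists>c\<in>Zp. a - of_int n = of_int p * c" using padic unfolding padic_like_def by blast
lemma int_dvd: "c \<in> Zp \<Longrightarrow> of_int n = of_int p * c \<Longrightarrow> p dvd n" using padic unfolding padic_like_def by blast
lemma inv_in: "a \<in> Zp \<Longrightarrow> \<not>(\<exists>c\<in>Zp. a = of_int p * c) \<Longrightarrow> inverse a \<in> Zp" using padic unfolding padic_like_def by blast
lemma root_in: "z ^ nat (p - 1) = 1 \<Longrightarrow> z \<in> Zp" using padic unfolding padic_like_def by blast
lemma card_roots: "card {z::'a. z ^ nat (p - 1) = 1} = nat (p - 1)" using padic unfolding padic_like_def by blast

lemma zero_in: "0 \<in> Zp" using diff_in[OF one_in one_in] by simp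
lemma uminus_in: "a \<in> Zp \<Longrightarrow> - a \<in> Zp" using diff_in[OF zero_in] by fastforce
lemma of_nat_in: "of_nat n \<in> Zp"
  by (induction n) (auto intro: add_in one_in zero_in)
lemma of_int_in: "of_int n \<in> Zp"
proof (cases "n \<ge> 0")
  case True then show ?thesis using of_nat_in[of "nat n"] by simp
next
  case False then show ?thesis using uminus_in[OF of_nat_in[of "nat (-n)"]] by simp
qed
lemma power_in: "a \<in> Zp \<Longrightarrow> a ^ n \<in> Zp"
  by (induction n) (auto intro: mult_in one_in)
lemma sum_in: "(\<And>i. i \<in> S \<Longrightarrow> f i \<in> Zp) \<Longrightarrow> sum f S \<in> Zp"
  by (induction S rule: infinite_finite_induct) (auto intro: add_in zero_in)
lemma prod_in: "(\<And>i. i \<in> S \<Longrightarrow> f i \<in> Zp) \<Longrightarrow> prod f S \<in> Zp"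
  by (induction S rule: infinite_finite_induct) (auto intro: mult_in one_in)

definition R :: "'a \<Rightarrow> int \<Rightarrow> bool" where
  "R a n \<longleftrightarrow> a \<in> Zp \<and> (\<exists>c\<in>Zp. a - of_int n = of_int p * c)"

lemma R_in: "R a n \<Longrightarrow> a \<in> Zp" by (simp add: R_def)

lemma R_of_int: "R (of_int n) n" using of_int_in zero_in by (auto simp: R_def intro!: bexI[of _ 0])

lemma R_cong: "R a n \<Longrightarrow> [n = m] (mod p) \<Longrightarrow> R a m"
proof -
  assume "R a n" "[n = m] (mod p)"
  then obtain c where c: "c \<in> Zp" "a - of_int n = of_int p * c" and a: "a \<in> Zp" by (auto simp: R_def)
  from \<open>[n = m] (mod p)\<close> obtain k where "n - m = p * k" by (metis cong_iff_dvd_diff cong_sym dvd_def)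
  hence "a - of_int m = of_int p * (c + of_int k)"
    using c(2) by (simp add: algebra_simps)
  thus ?thesis using a c add_in of_int_in by (auto simp: R_def)
qed

lemma R_add: "R a n \<Longrightarrow> R b m \<Longrightarrow> R (a + b) (n + m)"
  unfolding R_def
proof (elim conjE bexE, intro conjI)
  fix c c' assume *: "a \<in> Zp" "b \<in> Zp" "c \<in> Zp" "c' \<in> Zp" "a - of_int n = of_int p * c" "b - of_int m = of_int p * c'"
  show "a + b \<in> Zp" using * add_in by blast
  show "\<exists>c\<in>Zp. a + b - of_int (n + m) = of_int p * c"
    using * by (intro bexI[of _ "c + c'"]) (auto simp: algebra_simps intro: add_in)
qed

lemma R_neg: "R a n \<Longrightarrow> R (- a) (- n)"
  unfolding R_def
proof (elim conjE bexE, intro conjI)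
  fix c assume *: "a \<in> Zp" "c \<in> Zp" "a - of_int n = of_int p * c"
  show "- a \<in> Zp" using * uminus_in by blast
  show "\<exists>c\<in>Zp. - a - of_int (- n) = of_int p * c"
    using * by (intro bexI[of _ "- c"]) (auto simp: algebra_simps intro: uminus_in)
qed

lemma R_mult: "R a n \<Longrightarrow> R b m \<Longrightarrow> R (a * b) (n * m)"
  unfolding R_def
proof (elim conjE bexE, intro conjI)
  fix c c' assume *: "a \<in> Zp" "b \<in> Zp" "c \<in> Zp" "c' \<in> Zp" "a - of_int n = of_int p * c" "b - of_int m = of_int p * c'"
  show "a * b \<in> Zp" using * mult_in by blast
  have "a * b - of_int (n * m) = a * (b - of_int m) + (a - of_int n) * of_int m" by (simp add: algebra_simps)
  also have "\<dots> = of_int p * (a * c' + c * of_int m)" using * by (simp add: algebra_simps)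
  finally show "\<exists>c\<in>Zp. a * b - of_int (n * m) = of_int p * c"
    using * by (intro bexI[of _ "a * c' + c * of_int m"]) (auto intro: add_in mult_in of_int_in)
qed

lemma R_power: "R a n \<Longrightarrow> R (a ^ k) (n ^ k)"
  by (induction k) (auto intro: R_mult simp: R_of_int[of 1, simplified])

lemma R_sum: "(\<And>i. i \<in> S \<Longrightarrow> R (f i) (g i)) \<Longrightarrow> R (sum f S) (sum g S)"
  by (induction S rule: infinite_finite_induct) (auto intro: R_add simp: R_of_int[of 0, simplified])

lemma R_prod: "(\<And>i. i \<in> S \<Longrightarrow> R (f i) (g i)) \<Longrightarrow> R (prod f S) (prod g S)"
  by (induction S rule: infinite_finite_induct) (auto intro: R_mult simp: R_of_int[of 1, simplified])

lemma R_ex: "a \<in> Zp \<Longrightarrow> \<exists>n. R a n" using rep_ex by (auto simp: R_def)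

lemma R_zero_dvd: "R 0 n \<Longrightarrow> p dvd n"
  unfolding R_def using int_dvd by (metis diff_0 minus_mult_right of_int_minus dvd_minus_iff uminus_in)

lemma R_unique: "R a n \<Longrightarrow> R a m \<Longrightarrow> [n = m] (mod p)"
proof -
  assume "R a n" "R a m"
  hence "R (a - a) (n - m)" using R_add[OF _ R_neg] by (simp only: diff_conv_add_uminus)
  hence "p dvd (n - m)" using R_zero_dvd by simp
  thus ?thesis by (simp add: cong_iff_dvd_diff)
qed

lemma R_inverse: "R a n \<Longrightarrow> \<not> p dvd n \<Longrightarrow> [n * m = 1] (mod p) \<Longrightarrow> R (inverse a) m"
proof -
  assume a: "R a n" "\<not> p dvd n" "[n * m = 1] (mod p)"
  have nz: "\<not>(\<exists>c\<in>Zp. a = of_int p * c)"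
  proof
    assume "\<exists>c\<in>Zp. a = of_int p * c"
    then obtain c where c: "c \<in> Zp" "a = of_int p * c" by blast
    have "R (of_int p * c) 0" using c(1) by (auto simp: R_def intro: mult_in of_int_in)
    hence "[n = 0] (mod p)" using R_unique a(1) c(2) by blast
    thus False using a(2) by (simp add: cong_0_iff)
  qed
  hence ai: "inverse a \<in> Zp" using inv_in R_in[OF a(1)] by blast
  have a0: "a \<noteq> 0" using nz zero_in by auto
  obtain m' where m': "R (inverse a) m'" using R_ex[OF ai] by blast
  have "R (a * inverse a) (n * m')" using R_mult[OF a(1) m'] .
  hence "R 1 (n * m')" using a0 by simp
  hence "[n * m' = 1] (mod p)" using R_unique R_of_int[of 1] by (metis of_int_1)
  hence "[n * m' = n * m] (mod p)" using a(3) by (metis cong_sym cong_trans)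
  hence "[m' = m] (mod p)"
    using a(2) prime_p by (metis cong_mult_lcancel prime_imp_coprime coprime_commute)
  thus ?thesis using R_cong m' by blast
qed

end


context pl
begin

definition q :: nat where "q = nat (p - 1)"

lemma p_ge2: "p \<ge> 2" using prime_p prime_ge_2_int by blast
lemma q_pos: "q \<ge> 1" using p_ge2 by (simp add: q_def)
lemma int_q: "int q = p - 1" using p_ge2 by (simp add: q_def)
lemma q_Suc: "Suc (q - 1) = q" using q_pos by simp
lemma pow_q_split: "(z::'b::monoid_mult) * z ^ (q - 1) = z ^ q"
proof -
  have "z * z ^ (q - 1) = z ^ Suc (q - 1)" by simp
  thus ?thesis by (simp only: q_Suc)
qed

lemma R_1: "R 1 1" using R_of_int[of 1] by simp
lemma R_0: "R 0 0" using R_of_int[of 0] by simp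

lemma fermat: "\<not> p dvd y \<Longrightarrow> [y ^ q = 1] (mod p)"
proof -
  assume "\<not> p dvd y"
  define P where "P = nat p"
  define a where "a = nat (y mod p)"
  have pP: "p = int P" using p_ge2 by (simp add: P_def)
  have ya: "y mod p = int a" using p_ge2 by (simp add: a_def)
  have "prime P" using prime_p pP by simp
  moreover have "\<not> P dvd a"
  proof
    assume "P dvd a"
    hence "p dvd y mod p" using ya pP by simp
    thus False using \<open>\<not> p dvd y\<close> by (simp add: dvd_mod_iff)
  qed
  ultimately have "[a ^ (P - 1) = 1] (mod P)" by (rule fermat_theorem)
  hence "[int a ^ (P - 1) = 1] (mod int P)" using cong_int_iff[of "a ^ (P - 1)" 1 P] by simp
  moreover have "q = P - 1" by (simp add: q_def P_def nat_diff_distrib)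
  ultimately have "[(y mod p) ^ q = 1] (mod p)" using ya pP by simp
  moreover have "[y ^ q = (y mod p) ^ q] (mod p)" by (intro cong_pow) (simp add: cong_def)
  ultimately show ?thesis using cong_trans by blast
qed

lemma root_unit: "R a n \<Longrightarrow> a ^ q = 1 \<Longrightarrow> \<not> p dvd n"
proof
  assume a: "R a n" "a ^ q = 1" "p dvd n"
  have "R 1 (n ^ q)" using R_power[OF a(1), of q] a(2) by simp
  hence "[1 = n ^ q] (mod p)" using R_unique[OF R_1] by blast
  moreover have "[n ^ q = 0] (mod p)" using a(3) q_pos dvd_trans[OF a(3) dvd_power[of q n]]
    by (simp add: cong_0_iff)
  ultimately have "[1 = 0] (mod p)" by (rule cong_trans)
  thus False using p_ge2 by (simp add: cong_0_iff)
qed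

lemma root_inj:
  assumes z: "z ^ q = 1" "R z n" and z': "z' ^ q = 1" "R z' n"
  shows "z = z'"
proof -
  define w where "w = z * z' ^ (q - 1)"
  have z'q: "z' * z' ^ (q - 1) = 1" using z'(1) pow_q_split[of z'] by simp
  have "w ^ q = z ^ q * (z' ^ q) ^ (q - 1)" by (simp add: w_def power_mult_distrib power_mult[symmetric] mult.commute)
  hence wq: "w ^ q = 1" using z z' by simp
  have "R w (n * n ^ (q - 1))" unfolding w_def using R_mult[OF z(2) R_power[OF z'(2)]] .
  moreover have "n * n ^ (q - 1) = n ^ q" by (rule pow_q_split)
  moreover have "[n ^ q = 1] (mod p)" using fermat[OF root_unit[OF z(2) z(1)]] .
  ultimately have Rw: "R w 1" using R_cong by auto
  have "w = 1"
  proof (rule ccontr)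
    assume "w \<noteq> 1"
    hence "(\<Sum>i<q. w ^ i) = 0" using geometric_sum[of w q] wq by simp
    moreover have "R (\<Sum>i<q. w ^ i) (\<Sum>i<q. 1 ^ i)" by (rule R_sum) (rule R_power[OF Rw])
    ultimately have "R 0 (int q)" by simp
    hence "p dvd (p - 1)" using R_zero_dvd int_q by simp
    hence "p dvd p - (p - 1)" using dvd_diff[OF dvd_refl[of p]] by blast
    hence "p dvd 1" by simp
    thus False using p_ge2 by (simp add: zdvd_not_zless)
  qed
  hence "z = z * (z' * z' ^ (q - 1))" using z'q by simp
  also have "\<dots> = w * z'" by (simp add: w_def algebra_simps)
  finally show ?thesis using \<open>w = 1\<close> by simp
qed

lemma roots_finite: "finite {z::'a. z ^ q = 1}"
proof (rule ccontr)
  assume "infinite {z::'a. z ^ q = 1}"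
  hence "card {z::'a. z ^ q = 1} = 0" by simp
  thus False using card_roots q_pos by (simp add: q_def)
qed

lemma root_exists: assumes "\<not> p dvd y" shows "\<exists>z. z ^ q = 1 \<and> R z y"
proof -
  define U where "U = {z::'a. z ^ q = 1}"
  define f where "f z = (SOME n. R z n) mod p" for z
  have Rf: "R z (f z)" if "z \<in> U" for z
  proof -
    have "z \<in> Zp" using that root_in by (simp add: U_def q_def)
    then obtain n where "R z n" using R_ex by blast
    hence "R z (SOME n. R z n)" by (rule someI)
    thus ?thesis unfolding f_def by (rule R_cong) (simp add: cong_def)
  qed
  have fU: "f ` U \<subseteq> {1..<p}"
  proof
    fix m assume "m \<in> f ` U"
    then obtain z where z: "z \<in> U" "m = f z" by blast
    have "\<not> p dvd m" using root_unit Rf[OF z(1)] z by (auto simp: U_def)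
    moreover have "0 \<le> m" "m < p" using z p_ge2 by (auto simp: f_def)
    ultimately show "m \<in> {1..<p}" by (cases "m = 0") auto
  qed
  have inj: "inj_on f U"
  proof
    fix z z' assume "z \<in> U" "z' \<in> U" "f z = f z'"
    thus "z = z'" using root_inj[of z "f z" z'] Rf[of z] Rf[of z'] by (simp add: U_def)
  qed
  have "card (f ` U) = q" using card_image[OF inj] card_roots by (simp add: U_def q_def)
  moreover have "card {1..<p} = q" using p_ge2 by (simp add: q_def)
  ultimately have "f ` U = {1..<p}" using card_subset_eq[OF finite_atLeastLessThan_int fU] by simp
  moreover have "y mod p \<in> {1..<p}"
  proof -
    have "0 \<le> y mod p" "y mod p < p" "y mod p \<noteq> 0" using assms p_ge2 by (auto simp: dvd_eq_mod_eq_0)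
    thus ?thesis by auto
  qed
  ultimately have "y mod p \<in> f ` U" by simp
  then obtain z where zU: "y mod p = f z" "z \<in> U" by (rule imageE)
  hence "R z (y mod p)" using Rf[OF zU(2)] by simp
  hence "R z y" by (rule R_cong) (simp add: cong_def)
  thus ?thesis using zU(2) by (auto simp: U_def)
qed

definition omega :: "int \<Rightarrow> 'a" where
  "omega y = (if p dvd y then 0 else THE z. z ^ q = 1 \<and> R z y)"

lemma omega_prop: assumes "\<not> p dvd y" shows "omega y ^ q = 1" "R (omega y) y"
proof -
  obtain z where z: "z ^ q = 1" "R z y" using root_exists[OF assms] by blast
  have "(THE z. z ^ q = 1 \<and> R z y) = z"
  proof (rule the_equality)
    show "z ^ q = 1 \<and> R z y" using z by simp
    fix z' assume "z' ^ q = 1 \<and> R z' y"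
    thus "z' = z" using root_inj[of z' y z] z by blast
  qed
  thus "omega y ^ q = 1" "R (omega y) y" using z assms by (auto simp: omega_def)
qed

lemma omega_unique: assumes "\<not> p dvd y" "z ^ q = 1" "R z y" shows "omega y = z"
  using root_inj[OF omega_prop(1)[OF assms(1)] omega_prop(2)[OF assms(1)] assms(2,3)] .

lemma omega_char: "is_char p omega"
  unfolding is_char_def
proof (intro conjI allI impI)
  fix x
  show "omega x = omega (x mod p)"
  proof (cases "p dvd x")
    case True thus ?thesis by (simp add: omega_def dvd_eq_mod_eq_0)
  next
    case False
    hence F': "\<not> p dvd (x mod p)" by (simp add: dvd_eq_mod_eq_0)
    have "R (omega x) (x mod p)" using omega_prop(2)[OF False] by (rule R_cong) (simp add: cong_def)
    thus ?thesis using omega_unique[OF F' omega_prop(1)[OF False]] by simp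
  qed
next
  fix x assume "p dvd x" thus "omega x = 0" by (simp add: omega_def)
next
  show "omega 1 = 1" using omega_unique[of 1 1] R_1 p_ge2 by (simp add: zdvd_not_zless)
next
  fix x y
  show "omega (x * y) = omega x * omega y"
  proof (cases "p dvd x \<or> p dvd y")
    case True
    hence "p dvd x * y" by auto
    thus ?thesis using True by (auto simp: omega_def)
  next
    case False
    hence nd: "\<not> p dvd x * y" using prime_p by (simp add: prime_dvd_mult_iff)
    have "(omega x * omega y) ^ q = 1" using False omega_prop by (simp add: power_mult_distrib)
    moreover have "R (omega x * omega y) (x * y)" using False omega_prop R_mult by blast
    ultimately show ?thesis using omega_unique[OF nd] by simp
  qed
qed

end


context pl
begin

lemma prim_root: "\<exists>G::int. \<not> p dvd G \<and> (\<forall>e. [G ^ e = 1] (mod p) \<longleftrightarrow> q dvd e)"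
proof -
  define P where "P = nat p"
  have pP: "p = int P" using p_ge2 by (simp add: P_def)
  have P: "prime P" using prime_p pP by simp
  obtain g where g: "residue_primroot P g" using prime_primitive_root_exists[OF prime_gt_1_nat[OF P] P] by blast
  have ordg: "ord P g = q" using g P by (simp add: residue_primroot_def totient_prime q_def P_def nat_diff_distrib)
  have cop: "coprime P g" using g by (simp add: residue_primroot_def)
  have nd: "\<not> p dvd int g"
  proof
    assume "p dvd int g" hence "P dvd g" using pP by simp
    hence "P dvd gcd P g" by simp
    thus False using cop P by (simp add: prime_gt_1_nat)
  qed
  have "[int g ^ e = 1] (mod p) \<longleftrightarrow> q dvd e" for e
  proof -
    have "[int g ^ e = 1] (mod p) \<longleftrightarrow> [g ^ e = 1] (mod P)" using pP cong_int_iff[of "g ^ e" 1 P] by simp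
    also have "\<dots> \<longleftrightarrow> q dvd e" using ord_divides[of g e P] ordg by simp
    finally show ?thesis .
  qed
  thus ?thesis using nd by blast
qed

lemma char_pow_char: assumes c: "is_char p \<chi>" shows "is_char p (char_pow p \<chi> n)"
proof -
  have h1: "\<chi> x = \<chi> (x mod p)" for x using c by (simp add: is_char_def)
  have h3: "\<chi> 1 = 1" using c by (simp add: is_char_def)
  have h4: "\<chi> (x * y) = \<chi> x * \<chi> y" for x y using c by (simp add: is_char_def)
  have np1: "\<not> p dvd 1" using p_ge2 by (simp add: zdvd_not_zless)
  show ?thesis unfolding is_char_def char_pow_def
  proof (intro conjI allI impI)
    fix x show "(if p dvd x then 0 else \<chi> x ^ n) = (if p dvd x mod p then 0 else \<chi> (x mod p) ^ n)"
      using h1[of x] by (simp add: dvd_eq_mod_eq_0)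
  next
    fix x y
    show "(if p dvd x * y then 0 else \<chi> (x * y) ^ n) =
        (if p dvd x then 0 else \<chi> x ^ n) * (if p dvd y then 0 else \<chi> y ^ n)"
      using h4[of x y] prime_p by (auto simp: prime_dvd_mult_iff power_mult_distrib)
  qed (use np1 h3 in auto)
qed

lemma char_val_pow: assumes c: "is_char p \<chi>" shows "\<chi> (y ^ n) = \<chi> y ^ n"
proof -
  have h3: "\<chi> 1 = 1" using c by (simp add: is_char_def)
  have h4: "\<chi> (x * y) = \<chi> x * \<chi> y" for x y using c by (simp add: is_char_def)
  show ?thesis by (induction n) (simp_all add: h3 h4)
qed

lemma char_root: assumes "is_char p \<chi>" "\<not> p dvd y" shows "\<chi> y ^ q = 1"
proof -
  have "y ^ q mod p = 1" using fermat[OF assms(2)] p_ge2 by (simp add: cong_def)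
  moreover have "\<chi> (y ^ q) = \<chi> (y ^ q mod p)" using assms(1) by (simp only: is_char_def)
  moreover have "\<chi> 1 = 1" using assms(1) by (simp add: is_char_def)
  ultimately have "\<chi> (y ^ q) = 1" by simp
  thus ?thesis using char_val_pow[OF assms(1)] by simp
qed

lemma char_pow_mod: assumes "is_char p \<chi>" shows "char_pow p \<chi> n = char_pow p \<chi> (n mod q)"
proof
  fix y show "char_pow p \<chi> n y = char_pow p \<chi> (n mod q) y"
  proof (cases "p dvd y")
    case False
    have "\<chi> y ^ n = \<chi> y ^ (q * (n div q) + n mod q)" by (simp only: mult_div_mod_eq)
    also have "\<dots> = (\<chi> y ^ q) ^ (n div q) * \<chi> y ^ (n mod q)" by (simp only: power_add power_mult)
    finally show ?thesis using char_root[OF assms False] False by (simp add: char_pow_def)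
  qed (simp add: char_pow_def)
qed

lemma char_pow_pow: "char_pow p (char_pow p \<chi> k) m = char_pow p \<chi> (k * m)"
  by (auto simp: char_pow_def power_mult fun_eq_iff)

lemma char_pow_1: assumes c: "is_char p \<chi>" shows "char_pow p \<chi> 1 = \<chi>"
proof -
  have h2: "p dvd x \<Longrightarrow> \<chi> x = 0" for x using c by (simp add: is_char_def)
  show ?thesis using h2 by (auto simp: char_pow_def fun_eq_iff)
qed

lemma omega_nz: assumes "\<not> p dvd y" shows "omega y \<noteq> 0"
proof
  assume "omega y = 0"
  hence "omega y ^ q = 0" using q_pos by simp
  thus False using omega_prop(1)[OF assms] by simp
qed

lemma omega_pow_inj: assumes "a < q" "b < q" "char_pow p omega a = char_pow p omega b" shows "a = b"
proof -
  obtain G where G: "\<not> p dvd G" "\<And>e. [G ^ e = 1] (mod p) \<longleftrightarrow> q dvd e" using prim_root by blast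
  have key: False if ab: "a < b" "b < q" "char_pow p omega a = char_pow p omega b" for a b
  proof -
    have "omega G ^ a = omega G ^ b" using fun_cong[OF ab(3), of G] G(1) by (simp add: char_pow_def)
    moreover have "omega G ^ a * omega G ^ (b - a) = omega G ^ (a + (b - a))" by (simp only: power_add)
    moreover have "a + (b - a) = b" using ab(1) by simp
    ultimately have "omega G ^ a * omega G ^ (b - a) = omega G ^ a * 1" by simp
    hence e1: "omega G ^ (b - a) = 1" using omega_nz[OF G(1)] by simp
    have "R (omega G ^ (b - a)) (G ^ (b - a))" using R_power omega_prop(2)[OF G(1)] by blast
    hence "R 1 (G ^ (b - a))" using e1 by simp
    hence "[1 = G ^ (b - a)] (mod p)" using R_unique[OF R_1] by blast
    hence "[G ^ (b - a) = 1] (mod p)" by (rule cong_sym)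
    hence "q dvd (b - a)" using G(2) by blast
    moreover have "0 < b - a" "b - a < q" using ab by auto
    ultimately show False using nat_dvd_not_less by blast
  qed
  show ?thesis
  proof (rule ccontr)
    assume "a \<noteq> b"
    hence "a < b \<or> b < a" by arith
    thus False using key[of a b] key[of b a] assms by auto
  qed
qed

lemma omega_pow_in_chars: "char_pow p omega a \<in> chars p"
  using char_pow_char[OF omega_char] by (simp add: chars_def)

lemma chars_eq:
  fixes T :: "int \<Rightarrow> 'a"
  assumes "char_generator p T"
  shows "chars p = (\<lambda>a. char_pow p omega a) ` {..<q}"
proof -
  have Tc: "is_char p T" using assms by (simp add: char_generator_def)
  have sub: "chars p \<subseteq> (\<lambda>n. char_pow p T n) ` {..<q}"
  proof
    fix \<chi> :: "int \<Rightarrow> 'a" assume "\<chi> \<in> chars p"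
    then obtain k where "\<chi> = char_pow p T k" using assms by (auto simp: chars_def char_generator_def)
    hence "\<chi> = char_pow p T (k mod q)" using char_pow_mod[OF Tc] by simp
    moreover have "k mod q < q" using q_pos by simp
    ultimately show "\<chi> \<in> (\<lambda>n. char_pow p T n) ` {..<q}" by blast
  qed
  have fin: "finite (chars p :: (int \<Rightarrow> 'a) set)" using finite_subset[OF sub] by simp
  have "card (chars p :: (int \<Rightarrow> 'a) set) \<le> q" using card_mono[OF _ sub] card_image_le[of "{..<q}" "\<lambda>n. char_pow p T n"] by simp
  moreover have inj: "inj_on (\<lambda>a. char_pow p omega a) {..<q}" by (auto intro!: inj_onI omega_pow_inj)
  moreover have "(\<lambda>a. char_pow p omega a) ` {..<q} \<subseteq> chars p" using omega_pow_in_chars by blast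

  moreover note Ssub = \<open>(\<lambda>a. char_pow p omega a) ` {..<q} \<subseteq> chars p\<close>
  ultimately have "card ((\<lambda>a. char_pow p omega a) ` {..<q}) = card (chars p :: (int \<Rightarrow> 'a) set)"
    using card_image[OF inj] card_mono[OF fin Ssub] by simp
  thus ?thesis using card_subset_eq[OF fin Ssub] by simp
qed

lemma T_omega:
  fixes T :: "int \<Rightarrow> 'a"
  assumes "char_generator p T" "q \<ge> 2"
  shows "\<exists>k. k < q \<and> coprime k q \<and> T = char_pow p omega k"
proof -
  have "T \<in> chars p" using assms by (simp add: char_generator_def chars_def)
  then obtain k where k: "k < q" "T = char_pow p omega k" using chars_eq[OF assms(1)] by auto
  obtain m where m: "omega = char_pow p T m" using assms omega_char by (auto simp: char_generator_def)
  have "char_pow p omega 1 = omega" by (rule char_pow_1[OF omega_char])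
  also have "\<dots> = char_pow p T m" by (rule m)
  also have "\<dots> = char_pow p omega (k * m)" unfolding k(2) by (rule char_pow_pow)
  also have "\<dots> = char_pow p omega ((k * m) mod q)" by (rule char_pow_mod[OF omega_char])
  finally have "1 = (k * m) mod q"
    using omega_pow_inj[of 1 "(k * m) mod q"] assms(2) q_pos by simp
  hence "[k * m = 1] (mod q)" by (simp add: cong_def)
  hence "coprime (k * m) q" using cong_imp_coprime[of 1 "k * m" q] by (simp add: cong_sym)
  hence "coprime k q" by simp
  thus ?thesis using k by blast
qed

end


context pl
begin

lemma cong_imp_dvd_int: "[a = b] (mod p) \<Longrightarrow> p dvd (a - b)"
  by (simp add: cong_iff_dvd_diff)

lemma psum_multiple:
  assumes "0 < e" "q dvd e"
  shows "[(\<Sum>y\<in>{0..<p}. y ^ e) = -1] (mod p)"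
proof -
  have split: "{0..<p} = insert 0 {1..<p}" using p_ge2 by auto
  have "(\<Sum>y\<in>{0..<p}. y ^ e) = 0 ^ e + (\<Sum>y\<in>{1..<p}. y ^ e)" unfolding split by (subst sum.insert) auto
  also have "\<dots> = (\<Sum>y\<in>{1..<p}. y ^ e)" using assms(1) by simp
  finally have eq: "(\<Sum>y\<in>{0..<p}. y ^ e) = (\<Sum>y\<in>{1..<p}. y ^ e)" .
  obtain r where r: "e = q * r" using assms(2) by blast
  have "[(\<Sum>y\<in>{1..<p}. y ^ e) = (\<Sum>y\<in>{1..<p}. 1)] (mod p)"
  proof (rule cong_sum)
    fix y assume y: "y \<in> {1..<p}"
    hence "\<not> p dvd y" by (auto simp: zdvd_not_zless)
    hence "[(y ^ q) ^ r = 1 ^ r] (mod p)" using fermat by (intro cong_pow) auto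
    thus "[y ^ e = 1] (mod p)" by (simp add: r power_mult)
  qed
  moreover have "(\<Sum>y\<in>{1..<p}. (1::int)) = p - 1" using p_ge2 by simp
  moreover have "[p - 1 = -1] (mod p)" by (simp add: cong_iff_dvd_diff)
  ultimately have "[(\<Sum>y\<in>{0..<p}. y ^ e) = p - 1] (mod p)" using eq by simp
  thus ?thesis using \<open>[p - 1 = -1] (mod p)\<close> by (rule cong_trans)
qed

lemma psum_nonmultiple:
  assumes "\<not> q dvd e"
  shows "[(\<Sum>y\<in>{0..<p}. y ^ e) = 0] (mod p)"
proof -
  obtain G where G: "\<not> p dvd G" "\<And>e. [G ^ e = 1] (mod p) \<longleftrightarrow> q dvd e" using prim_root by blast
  have copG: "coprime G p" using prime_imp_coprime[OF prime_p G(1)] by (simp add: coprime_commute)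
  define f where "f y = (G * y) mod p" for y
  have fA: "f ` {0..<p} \<subseteq> {0..<p}" using p_ge2 by (auto simp: f_def)
  have inj: "inj_on f {0..<p}"
  proof
    fix y y' assume yy: "y \<in> {0..<p}" "y' \<in> {0..<p}" "f y = f y'"
    hence "[G * y = G * y'] (mod p)" by (simp add: f_def cong_def)
    hence "[y = y'] (mod p)" using cong_mult_lcancel[OF copG] by blast
    thus "y = y'" using yy(1,2) by (intro cong_less_imp_eq_int) auto
  qed
  have bij: "bij_betw f {0..<p} {0..<p}"
    using endo_inj_surj[OF _ fA inj] inj by (simp add: bij_betw_def)
  define S where "S = (\<Sum>y\<in>{0..<p}. y ^ e)"
  have "S = (\<Sum>y\<in>{0..<p}. f y ^ e)" unfolding S_def by (rule sum.reindex_bij_betw[OF bij, symmetric])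
  moreover have "[(\<Sum>y\<in>{0..<p}. f y ^ e) = (\<Sum>y\<in>{0..<p}. (G * y) ^ e)] (mod p)"
    by (intro cong_sum cong_pow) (simp add: f_def cong_def)
  moreover have "(\<Sum>y\<in>{0..<p}. (G * y) ^ e) = G ^ e * S"
    by (simp add: S_def power_mult_distrib sum_distrib_left)
  ultimately have "[S = G ^ e * S] (mod p)" by simp
  hence "p dvd S - G ^ e * S" by (rule cong_imp_dvd_int)
  hence "p dvd - (S - G ^ e * S)" by (simp only: dvd_minus_iff)
  moreover have "(G ^ e - 1) * S = - (S - G ^ e * S)" by (simp add: algebra_simps)
  ultimately have "p dvd (G ^ e - 1) * S" by simp
  moreover have "\<not> p dvd (G ^ e - 1)" using G(2)[of e] assms by (simp add: cong_iff_dvd_diff)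
  ultimately have "p dvd S" using prime_p by (simp add: prime_dvd_mult_iff)
  thus ?thesis by (simp add: S_def cong_0_iff)
qed

lemma psum:
  "[(\<Sum>y\<in>{0..<p}. y ^ e) = (if 0 < e \<and> q dvd e then -1 else 0)] (mod p)"
proof (cases "0 < e \<and> q dvd e")
  case True thus ?thesis using psum_multiple by simp
next
  case False
  show ?thesis
  proof (cases "e = 0")
    case True
    have "(\<Sum>y\<in>{0..<p}. y ^ e) = p" using True p_ge2 by simp
    thus ?thesis using True by (simp add: cong_0_iff)
  next
    case F: False
    hence "\<not> q dvd e" using False by simp
    thus ?thesis using psum_nonmultiple False by simp
  qed
qed

lemma binom_term: "y ^ u * (1 - y) ^ v = (\<Sum>i\<le>v. int (v choose i) * (-1) ^ i * y ^ (u + i))" for y :: int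
  proof -
    have "(1 - y) ^ v = (- y + 1) ^ v" by simp
    also have "\<dots> = (\<Sum>i\<le>v. int (v choose i) * (- y) ^ i * 1 ^ (v - i))" by (rule binomial_ring)
    finally have "y ^ u * (1 - y) ^ v = y ^ u * (\<Sum>i\<le>v. int (v choose i) * (- y) ^ i * 1 ^ (v - i))"
      by (simp only:)
    also have "\<dots> = (\<Sum>i\<le>v. y ^ u * (int (v choose i) * (- y) ^ i * 1 ^ (v - i)))"
      by (rule sum_distrib_left)
    also have "\<dots> = (\<Sum>i\<le>v. int (v choose i) * (-1) ^ i * y ^ (u + i))"
    proof (rule sum.cong)
      fix i show "y ^ u * (int (v choose i) * (- y) ^ i * 1 ^ (v - i)) = int (v choose i) * (-1) ^ i * y ^ (u + i)"
        using power_minus[of y i] by (simp add: power_add)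
    qed (rule refl)
    finally show ?thesis .
  qed

lemma binom_expand:
  "(\<Sum>y\<in>{0..<p}. y ^ u * (1 - y) ^ v) =
   (\<Sum>i\<le>v. int (v choose i) * (-1) ^ i * (\<Sum>y\<in>{0..<p}. y ^ (u + i)))"
proof -
  have "(\<Sum>y\<in>{0..<p}. y ^ u * (1 - y) ^ v) =
      (\<Sum>y\<in>{0..<p}. \<Sum>i\<le>v. int (v choose i) * (-1) ^ i * y ^ (u + i))"
    by (rule sum.cong[OF refl binom_term])
  also have "\<dots> = (\<Sum>i\<le>v. \<Sum>y\<in>{0..<p}. int (v choose i) * (-1) ^ i * y ^ (u + i))"
    by (rule sum.swap)
  also have "\<dots> = (\<Sum>i\<le>v. int (v choose i) * (-1) ^ i * (\<Sum>y\<in>{0..<p}. y ^ (u + i)))"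
    by (rule sum.cong[OF refl], rule sum_distrib_left[symmetric])
  finally show ?thesis .
qed

end


definition ff :: "int \<Rightarrow> nat \<Rightarrow> int" where
  "ff x k = (\<Prod>i<k. x - int i)"

lemma ff_0 [simp]: "ff x 0 = 1" by (simp add: ff_def)
lemma ff_Suc: "ff x (Suc k) = ff x k * (x - int k)" by (simp add: ff_def)

lemma ff_Suc': "ff x (Suc k) = x * ff (x - 1) k"
proof (induction k)
  case 0 thus ?case by (simp add: ff_def)
next
  case (Suc k)
  have "ff x (Suc (Suc k)) = ff x (Suc k) * (x - int (Suc k))" by (rule ff_Suc)
  also have "\<dots> = x * ff (x - 1) k * (x - 1 - int k)" using Suc by simp
  also have "\<dots> = x * ff (x - 1) (Suc k)" by (simp add: ff_Suc)
  finally show ?case .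
qed

lemma ff_neg: "ff (- x) k = (-1) ^ k * ff (x + int k - 1) k"
proof (induction k)
  case 0 thus ?case by simp
next
  case (Suc k)
  have "ff (- x) (Suc k) = ff (- x) k * (- x - int k)" by (rule ff_Suc)
  also have "\<dots> = (-1) ^ k * ff (x + int k - 1) k * (- (x + int k))" using Suc by simp
  also have "\<dots> = (-1) ^ Suc k * ((x + int k) * ff (x + int k - 1) k)" by (simp add: algebra_simps)
  also have "(x + int k) * ff (x + int k - 1) k = ff (x + int (Suc k) - 1) (Suc k)"
    using ff_Suc'[of "x + int k" k] by simp
  finally show ?case .
qed

lemma ff_nat: "ff (int n) k = fact k * int (n choose k)"
proof -
  have "(of_int (ff (int n) k) :: rat) = (\<Prod>i = 0..<k. of_nat n - of_nat i)"
    by (simp add: ff_def atLeast0LessThan)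
  also have "\<dots> = fact k * (of_nat n gchoose k)" by (rule gbinomial_mult_fact[symmetric])
  also have "\<dots> = fact k * of_nat (n choose k)" by (simp add: binomial_gbinomial)
  also have "\<dots> = of_int (fact k * int (n choose k))" by simp
  finally show ?thesis by (simp only: of_int_eq_iff)
qed

lemma ff_cong: "[x = y] (mod m) \<Longrightarrow> [ff x k = ff y k] (mod m)"
  unfolding ff_def by (intro cong_prod cong_diff) auto

context pl
begin

lemma fact_cancel:
  assumes "int k < p" "[fact k * A = fact k * B] (mod p)"
  shows "[A = B] (mod p)"
proof -
  define P where "P = nat p"
  have pP: "p = int P" using p_ge2 by (simp add: P_def)
  have P: "prime P" using prime_p pP by simp
  have "\<not> P dvd fact k" using prime_dvd_fact_iff[OF P] assms(1) pP by simp
  have nd: "\<not> p dvd (fact k :: int)"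
  proof
    assume "p dvd (fact k :: int)"
    hence "int P dvd int (fact k)" using pP by (simp add: of_nat_fact)
    thus False using \<open>\<not> P dvd fact k\<close> by (simp only: int_dvd_int_iff)
  qed
  have "coprime (fact k :: int) p" using prime_imp_coprime[OF prime_p nd] by (simp add: coprime_commute)
  thus ?thesis using assms(2) cong_mult_lcancel by blast
qed

lemma binom_cong_gen:
  assumes "int k < p" "[int n = - x] (mod p)" "ff (x + int k - 1) k = fact k * B"
  shows "[int (n choose k) = (-1) ^ k * B] (mod p)"
proof -
  have "fact k * int (n choose k) = ff (int n) k" by (simp add: ff_nat)
  moreover have "[ff (int n) k = ff (- x) k] (mod p)" by (rule ff_cong[OF assms(2)])
  moreover have "ff (- x) k = fact k * ((-1) ^ k * B)" using ff_neg[of x k] assms(3) by simp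
  ultimately have "[fact k * int (n choose k) = fact k * ((-1) ^ k * B)] (mod p)" by simp
  thus ?thesis by (rule fact_cancel[OF assms(1)])
qed

lemma binom_neg:
  assumes "int k < p" "[int n = - 1 - int m] (mod p)"
  shows "[int (n choose k) = (-1) ^ k * int ((m + k) choose k)] (mod p)"
proof (rule binom_cong_gen[OF assms(1)])
  show "[int n = - (int m + 1)] (mod p)" using assms(2) by (simp add: algebra_simps)
  show "ff (int m + 1 + int k - 1) k = fact k * int ((m + k) choose k)"
    using ff_nat[of "m + k" k] by simp
qed

lemma binom_refl:
  assumes "int a < p" "m \<le> q"
  shows "[int ((a + (q - m)) choose a) = (-1) ^ a * int (m choose a)] (mod p)"
proof (rule binom_cong_gen[OF assms(1)])
  have "int (a + (q - m)) = int a + (p - 1) - int m" using assms(2) int_q by simp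
  thus "[int (a + (q - m)) = - (int m + 1 - int a)] (mod p)"
    by (simp add: cong_iff_dvd_diff algebra_simps)
  show "ff (int m + 1 - int a + int a - 1) a = fact a * int (m choose a)"
    using ff_nat[of m a] by simp
qed

end


context pl
begin

lemma q_even: assumes "q \<ge> 2" shows "even q"
proof -
  have "p \<noteq> 2" using assms int_q by auto
  have "odd p"
  proof
    assume "even p"
    hence "2 dvd p" by simp
    hence "2 = p" using primes_dvd_imp_eq[of 2 p] prime_p by simp
    thus False using \<open>p \<noteq> 2\<close> by simp
  qed
  hence "odd (int q + 1)" using int_q by simp
  thus ?thesis by simp
qed

lemma cond_eq:
  assumes "1 \<le> e" "e < q" "a < q" "i \<le> q - a"
  shows "(0 < e + a + i \<and> q dvd (e + a + i)) \<longleftrightarrow> (i = q - (e + a) \<and> e + a \<le> q)"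
proof
  assume h: "0 < e + a + i \<and> q dvd (e + a + i)"
  then obtain r where r: "e + a + i = q * r" by blast
  have "e + a + i < q * 2" using assms by simp
  hence "r < 2" using r by (metis mult_less_cancel1)
  moreover have "r \<noteq> 0" using h r by auto
  ultimately have "r = 1" by simp
  thus "i = q - (e + a) \<and> e + a \<le> q" using r by simp
next
  assume "i = q - (e + a) \<and> e + a \<le> q"
  hence "e + a + i = q" by simp
  thus "0 < e + a + i \<and> q dvd (e + a + i)" using q_pos by simp
qed

lemma sum_if_delta:
  fixes V c :: nat
  shows "(\<Sum>i\<le>V. g i * (if i = c \<and> P then -1 else 0)) = (if P \<and> c \<le> V then - g c else (0::int))"
proof -
  have "(\<Sum>i\<le>V. g i * (if i = c \<and> P then -1 else 0)) = (\<Sum>i\<le>V. if i = c then (if P then - g i else 0) else 0)"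
    by (rule sum.cong) auto
  also have "\<dots> = (if c \<in> {..V} then (if P then - g c else 0) else 0)"
    by (rule sum.delta) (rule finite_atMost)
  finally show ?thesis by auto
qed

lemma main_term:
  assumes q2: "q \<ge> 2" and e: "1 \<le> e" "e < q" and a: "a < q"
  shows "[(-1) ^ a * (\<Sum>y\<in>{0..<p}. y ^ (e + a) * (1 - y) ^ (q - a)) = - int ((a + e) choose e)] (mod p)"
proof -
  define V where "V = q - a"
  define c where "c = q - (e + a)"
  define g where "g i = int (V choose i) * (-1) ^ i" for i
  have X1: "(\<Sum>y\<in>{0..<p}. y ^ (e + a) * (1 - y) ^ V) = (\<Sum>i\<le>V. g i * (\<Sum>y\<in>{0..<p}. y ^ (e + a + i)))"
    unfolding g_def by (rule binom_expand)
  have X2: "[(\<Sum>i\<le>V. g i * (\<Sum>y\<in>{0..<p}. y ^ (e + a + i))) =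
                  (\<Sum>i\<le>V. g i * (if i = c \<and> e + a \<le> q then -1 else 0))] (mod p)"
  proof (rule cong_sum, rule cong_mult[OF cong_refl])
    fix i assume "i \<in> {..V}"
    hence iV: "i \<le> q - a" by (simp add: V_def)
    have "[(\<Sum>y\<in>{0..<p}. y ^ (e + a + i)) = (if 0 < e + a + i \<and> q dvd (e + a + i) then -1 else 0)] (mod p)"
      by (rule psum)
    thus "[(\<Sum>y\<in>{0..<p}. y ^ (e + a + i)) = (if i = c \<and> e + a \<le> q then -1 else 0)] (mod p)"
      using cond_eq[OF e a iV] by (simp add: c_def)
  qed
  have X3: "(\<Sum>i\<le>V. g i * (if i = c \<and> e + a \<le> q then -1 else 0)) =
       (if e + a \<le> q \<and> c \<le> V then - g c else 0)" by (rule sum_if_delta)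
  have X4: "(if e + a \<le> q \<and> c \<le> V then - g c else 0) = (if e + a \<le> q then - g c else 0)"
    by (auto simp: c_def V_def)
  have I: "[(\<Sum>y\<in>{0..<p}. y ^ (e + a) * (1 - y) ^ V) = (if e + a \<le> q then - g c else 0)] (mod p)"
    using X2 unfolding X1 X3 X4 .
  have pa: "int e < p" using e int_q by simp
  have Vc: "[int V = - 1 - int a] (mod p)" using a int_q by (simp add: V_def of_nat_diff cong_iff_dvd_diff)
  have B: "[int (V choose e) = (-1) ^ e * int ((a + e) choose e)] (mod p)"
    by (rule binom_neg[OF pa Vc])
  show ?thesis
  proof (cases "e + a \<le> q")
    case True
    have Ve: "V - c = e" "c \<le> V" using True by (auto simp: V_def c_def)
    have "V choose c = V choose e" using binomial_symmetric[OF Ve(2)] unfolding Ve(1) .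
    define w where "w = q - e"
    have w: "q = e + w" using e(2) by (simp add: w_def)
    have "a + c = w" using True w by (simp add: c_def)
    have sgn: "(-1::int) ^ (a + c) = (-1) ^ e"
    proof -
      have "(-1::int) ^ q = 1" using q_even[OF q2] by simp
      moreover have "(-1::int) ^ e * (-1) ^ w = (-1) ^ q" unfolding w by (rule power_add[symmetric])
      ultimately have "(-1::int) ^ e * (-1) ^ w = 1" by simp
      moreover have "(-1::int) ^ w = (-1) ^ e * ((-1) ^ e * (-1) ^ w)"
        by (simp add: mult.assoc[symmetric] power_mult_distrib[symmetric])
      ultimately have "(-1::int) ^ w = (-1) ^ e" by simp
      thus ?thesis using \<open>a + c = w\<close> by simp
    qed
    have "(-1) ^ a * (- g c) = - (int (V choose e) * (-1) ^ (a + c))"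
      using \<open>V choose c = V choose e\<close> by (simp add: g_def power_add)
    also have "\<dots> = - ((-1) ^ e * int (V choose e))" using sgn by simp
    finally have eq: "(-1) ^ a * (- g c) = - ((-1) ^ e * int (V choose e))" .
    have C1: "[(-1) ^ a * (\<Sum>y\<in>{0..<p}. y ^ (e + a) * (1 - y) ^ V) = (-1) ^ a * (- g c)] (mod p)"
      using I True by (intro cong_mult[OF cong_refl]) simp
    have C2: "[- ((-1) ^ e * int (V choose e)) = - ((-1) ^ e * ((-1) ^ e * int ((a + e) choose e)))] (mod p)"
      using B by (intro cong_minus_minus_iff[THEN iffD2] cong_mult[OF cong_refl])
    have id: "(-1::int) ^ e * ((-1) ^ e * x) = x" for x
      by (simp add: mult.assoc[symmetric] power_mult_distrib[symmetric])
    have "[(-1) ^ a * (\<Sum>y\<in>{0..<p}. y ^ (e + a) * (1 - y) ^ V) = - ((-1) ^ e * int (V choose e))] (mod p)"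
      using C1 unfolding eq .
    hence "[(-1) ^ a * (\<Sum>y\<in>{0..<p}. y ^ (e + a) * (1 - y) ^ V) = - ((-1) ^ e * ((-1) ^ e * int ((a + e) choose e)))] (mod p)"
      using C2 by (rule cong_trans)
    thus ?thesis unfolding id V_def .
  next
    case False
    have "q < e + a" using False by simp
    hence "V < e" unfolding V_def using less_diff_conv2[of a q e] a by simp
    hence Z: "V choose e = 0" by (rule binomial_eq_0)
    have "[0 = (-1) ^ e * int ((a + e) choose e)] (mod p)" using B unfolding Z by simp
    hence "[(-1) ^ e * 0 = (-1) ^ e * ((-1) ^ e * int ((a + e) choose e))] (mod p)" by (intro cong_mult[OF cong_refl]) simp
    moreover have "(-1::int) ^ e * ((-1) ^ e * x) = x" for x by (simp add: mult.assoc[symmetric] power_mult_distrib[symmetric])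
    ultimately have "[0 = int ((a + e) choose e)] (mod p)" by simp
    hence z: "[0 = - int ((a + e) choose e)] (mod p)" by (simp add: cong_iff_dvd_diff)
    have "[(-1) ^ a * (\<Sum>y\<in>{0..<p}. y ^ (e + a) * (1 - y) ^ V) = (-1) ^ a * 0] (mod p)"
      using I False by (intro cong_mult[OF cong_refl]) simp
    hence "[(-1) ^ a * (\<Sum>y\<in>{0..<p}. y ^ (e + a) * (1 - y) ^ V) = 0] (mod p)" by simp
    thus ?thesis using z unfolding V_def by (rule cong_trans)
  qed
qed

end


context pl
begin

definition Iint :: "nat \<Rightarrow> nat \<Rightarrow> int" where
  "Iint e a = (\<Sum>y\<in>{0..<p}. y ^ (e + a) * (1 - y) ^ (q - a))"

lemma p_nz: "(of_int p :: 'a) \<noteq> 0" using p_ge2 by simp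

lemma inv_root: assumes "(z::'a) ^ q = 1" "a < q" shows "inverse (z ^ a) = z ^ (q - a)"
proof (rule inverse_unique)
  have "z ^ a * z ^ (q - a) = z ^ (a + (q - a))" by (simp only: power_add)
  also have "a + (q - a) = q" using assms(2) by simp
  finally show "z ^ a * z ^ (q - a) = 1" using assms(1) by simp
qed

lemma gb_term:
  assumes e: "1 \<le> e" "e < q" and a: "a < q"
  shows "R (of_int p * gbinom p (char_mult (char_pow p omega e) (char_pow p omega a)) (char_pow p omega a))
           ((-1) ^ a * Iint e a)"
proof -
  define \<chi> where "\<chi> = char_pow p omega a"
  define A where "A = char_pow p omega e"
  have np1: "\<not> p dvd (-1)" using p_ge2 by (simp add: zdvd_not_zless)
  have eq: "of_int p * gbinom p (char_mult A \<chi>) \<chi> = \<chi> (-1) * (\<Sum>y\<in>{0..<p}. A y * \<chi> y * inverse (\<chi> (1 - y)))"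
    using p_nz by (simp add: gbinom_def char_mult_def)
  have R1: "R (\<chi> (-1)) ((-1) ^ a)" using np1 R_power[OF omega_prop(2)[OF np1]] by (simp add: \<chi>_def char_pow_def)
  have R2: "R (A y * \<chi> y * inverse (\<chi> (1 - y))) (y ^ (e + a) * (1 - y) ^ (q - a))" if y: "y \<in> {0..<p}" for y
  proof (cases "p dvd y")
    case True
    hence "y = 0" using y mod_pos_pos_trivial[of y p] by (simp add: dvd_eq_mod_eq_0)
    have L: "A y * \<chi> y * inverse (\<chi> (1 - y)) = 0" using True by (simp add: A_def char_pow_def)
    have Rz: "y ^ (e + a) * (1 - y) ^ (q - a) = 0" using \<open>y = 0\<close> e by simp
    show ?thesis unfolding L Rz by (rule R_0)
  next
    case F1: False
    show ?thesis
    proof (cases "p dvd (1 - y)")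
      case True
      hence "p dvd - (1 - y)" by (simp only: dvd_minus_iff)
      hence "[y = 1] (mod p)" by (simp add: cong_iff_dvd_diff)
      hence "y = 1" using y p_ge2 by (intro cong_less_imp_eq_int) auto
      have L: "A y * \<chi> y * inverse (\<chi> (1 - y)) = 0" using True by (simp add: \<chi>_def char_pow_def)
      have Rz: "y ^ (e + a) * (1 - y) ^ (q - a) = 0" using \<open>y = 1\<close> a by simp
      show ?thesis unfolding L Rz by (rule R_0)
    next
      case F2: False
      have w1: "R (omega y) y" "R (omega (1 - y)) (1 - y)" using omega_prop F1 F2 by auto
      have "A y * \<chi> y * inverse (\<chi> (1 - y)) = omega y ^ (e + a) * omega (1 - y) ^ (q - a)"
        using F1 F2 inv_root[OF omega_prop(1)[OF F2] a] by (simp add: A_def \<chi>_def char_pow_def power_add)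
      moreover have "R (omega y ^ (e + a) * omega (1 - y) ^ (q - a)) (y ^ (e + a) * (1 - y) ^ (q - a))"
        using w1 by (intro R_mult R_power)
      ultimately show ?thesis by simp
    qed
  qed
  have "R (\<chi> (-1) * (\<Sum>y\<in>{0..<p}. A y * \<chi> y * inverse (\<chi> (1 - y)))) ((-1) ^ a * Iint e a)"
    unfolding Iint_def by (intro R_mult[OF R1] R_sum R2)
  thus ?thesis using eq by (simp add: A_def \<chi>_def)
qed

end


lemma prod_neg_shift: "(\<Prod>i<k. - m + int i) = (-1) ^ k * ff m k"
proof (induction k)
  case 0 thus ?case by simp
next
  case (Suc k)
  have "(\<Prod>i<Suc k. - m + int i) = (\<Prod>i<k. - m + int i) * (- m + int k)" by simp
  also have "\<dots> = (-1) ^ Suc k * (ff m k * (m - int k))" using Suc by (simp add: algebra_simps)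
  finally show ?case by (simp add: ff_Suc)
qed

context pl
begin

lemma not_pZ: assumes "\<not> p dvd n" shows "\<not> (\<exists>c\<in>Zp. (of_int n :: 'a) = of_int p * c)"
  using int_dvd assms by blast

lemma inv_int_in: "\<not> p dvd n \<Longrightarrow> inverse (of_int n :: 'a) \<in> Zp"
  using inv_in[OF of_int_in not_pZ] by blast

lemma R_div: assumes "R X (F * Y)" "\<not> p dvd F" shows "R (X / of_int F) Y"
proof -
  obtain c where c: "c \<in> Zp" "X - of_int (F * Y) = of_int p * c" "X \<in> Zp" using assms(1) by (auto simp: R_def)
  have F0: "(of_int F :: 'a) \<noteq> 0" using assms(2) by auto
  have iF: "inverse (of_int F :: 'a) \<in> Zp" by (rule inv_int_in[OF assms(2)])
  have "X / of_int F - of_int Y = (X - of_int (F * Y)) * inverse (of_int F)"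
    using F0 by (simp add: field_simps)
  also have "\<dots> = of_int p * (c * inverse (of_int F))" using c(2) by simp
  finally show ?thesis using c iF by (auto simp: R_def divide_inverse intro!: mult_in bexI[of _ "c * inverse (of_int F)"])
qed

lemma fact_ndvd: assumes "int k < p" shows "\<not> p dvd (fact k :: int)"
proof -
  define P where "P = nat p"
  have pP: "p = int P" using p_ge2 by (simp add: P_def)
  have P: "prime P" using prime_p pP by simp
  have "\<not> P dvd fact k" using prime_dvd_fact_iff[OF P] assms pP by simp
  show ?thesis
  proof
    assume "p dvd (fact k :: int)"
    hence "int P dvd int (fact k)" using pP by (simp add: of_nat_fact)
    thus False using \<open>\<not> P dvd fact k\<close> by (simp only: int_dvd_int_iff)
  qed
qed

lemma R_jd:
  assumes "d * t = q" "\<not> p dvd int d"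
  shows "R (of_nat j / of_nat d :: 'a) (- int (j * t))"
proof -
  have d0: "(of_nat d :: 'a) \<noteq> 0" using assms(2) by (cases "d = 0") auto
  have id: "inverse (of_nat d :: 'a) \<in> Zp" using inv_int_in[OF assms(2)] by simp
  have jd: "(of_nat j / of_nat d :: 'a) \<in> Zp" using id by (simp add: divide_inverse mult_in of_nat_in)
  have "(of_nat j / of_nat d :: 'a) - of_int (- int (j * t)) = of_nat j * (1 + of_nat d * of_nat t) / of_nat d"
    using d0 by (simp add: field_simps)
  also have "(1 + of_nat d * of_nat t :: 'a) = of_int p" using assms(1) int_q
    by (metis add.commute diff_add_cancel of_int_of_nat_eq of_nat_mult of_int_add of_int_1)
  finally have "(of_nat j / of_nat d :: 'a) - of_int (- int (j * t)) = of_int p * (of_nat j / of_nat d)"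
    by simp
  thus ?thesis using jd unfolding R_def by blast
qed

lemma R_poch:
  assumes "d * t = q" "\<not> p dvd int d"
  shows "R (pochhammer (of_nat j / of_nat d :: 'a) k) ((-1) ^ k * (fact k * int ((j * t) choose k)))"
proof -
  have "R (pochhammer (of_nat j / of_nat d :: 'a) k) (\<Prod>i<k. - int (j * t) + int i)"
    unfolding pochhammer_prod atLeast0LessThan
    by (intro R_prod R_add R_jd[OF assms]) (simp add: R_of_int[of "int _", simplified])
  thus ?thesis using prod_neg_shift[of "int (j * t)" k] ff_nat[of "j * t" k] by simp
qed

lemma R_hyp_term:
  assumes "d * t = q" "\<not> p dvd int d" "d \<ge> 2" "int k < p"
  shows "R ((\<Prod>a\<leftarrow>map (\<lambda>j. of_nat j / of_nat d) [1..<d]. pochhammer a k) /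
            ((\<Prod>b\<leftarrow>replicate (d - 2) 1. pochhammer b k) * fact k) * (of_int x :: 'a) ^ k)
           ((\<Prod>j\<in>{1..<d}. (-1) ^ k * int ((j * t) choose k)) * x ^ k)"
proof -
  have L1: "(\<Prod>a\<leftarrow>map (\<lambda>j. of_nat j / of_nat d) [1..<d]. pochhammer a k) =
            (\<Prod>j\<in>{1..<d}. pochhammer (of_nat j / of_nat d :: 'a) k)"
  proof -
    have "(\<Prod>j\<in>set [1..<d]. pochhammer (of_nat j / of_nat d :: 'a) k) =
          prod_list (map (\<lambda>j. pochhammer (of_nat j / of_nat d :: 'a) k) [1..<d])"
      by (rule prod.distinct_set_conv_list) simp
    thus ?thesis by (simp add: map_map o_def)
  qed
  have L2: "(\<Prod>b\<leftarrow>replicate (d - 2) (1::'a). pochhammer b k) * fact k = of_int (fact k ^ (d - 1))"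
  proof -
    have "(\<Prod>b\<leftarrow>replicate (d - 2) (1::'a). pochhammer b k) = fact k ^ (d - 2)"
      by (simp add: pochhammer_fact)
    moreover have "(fact k :: 'a) ^ (d - 2) * fact k = fact k ^ (d - 1)"
      using assms(3) by (metis power_Suc2 Suc_diff_Suc numeral_2_eq_2 less_le_trans lessI Suc_1 diff_Suc_1)
    ultimately show ?thesis by simp
  qed
  have R1: "R (\<Prod>j\<in>{1..<d}. pochhammer (of_nat j / of_nat d :: 'a) k)
             (\<Prod>j\<in>{1..<d}. (-1) ^ k * (fact k * int ((j * t) choose k)))"
    by (intro R_prod R_poch[OF assms(1,2)])
  have "(\<Prod>j\<in>{1..<d}. (-1) ^ k * (fact k * int ((j * t) choose k))) =
        fact k ^ (d - 1) * (\<Prod>j\<in>{1..<d}. (-1) ^ k * int ((j * t) choose k))"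
    by (simp add: prod.distrib)
  hence R1': "R (\<Prod>j\<in>{1..<d}. pochhammer (of_nat j / of_nat d :: 'a) k)
             (fact k ^ (d - 1) * (\<Prod>j\<in>{1..<d}. (-1) ^ k * int ((j * t) choose k)))" using R1 by simp
  have nd: "\<not> p dvd (fact k ^ (d - 1) :: int)"
  proof
    assume "p dvd (fact k ^ (d - 1) :: int)"
    hence "p dvd (fact k :: int)" by (rule prime_dvd_power[OF prime_p])
    thus False using fact_ndvd[OF assms(4)] by simp
  qed
  have "R ((\<Prod>j\<in>{1..<d}. pochhammer (of_nat j / of_nat d :: 'a) k) / of_int (fact k ^ (d - 1)))
           (\<Prod>j\<in>{1..<d}. (-1) ^ k * int ((j * t) choose k))"
    by (rule R_div[OF R1' nd])
  hence "R ((\<Prod>j\<in>{1..<d}. pochhammer (of_nat j / of_nat d :: 'a) k) / of_int (fact k ^ (d - 1)) * of_int x ^ k)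
           ((\<Prod>j\<in>{1..<d}. (-1) ^ k * int ((j * t) choose k)) * x ^ k)"
    by (intro R_mult R_power R_of_int[of x, simplified])
  thus ?thesis unfolding L1 L2 .
qed

end


lemma perm_mult_mod:
  fixes k0 d :: nat
  assumes "coprime k0 d"
  shows "bij_betw (\<lambda>j. (k0 * j) mod d) {1..<d} {1..<d}"
proof -
  define f where "f j = (k0 * j) mod d" for j
  have into: "f ` {1..<d} \<subseteq> {1..<d}"
  proof
    fix m assume "m \<in> f ` {1..<d}"
    then obtain j where j: "j \<in> {1..<d}" "m = f j" by blast
    have dpos: "d > 0" using j by auto
    have "\<not> d dvd k0 * j"
    proof
      assume "d dvd k0 * j"
      moreover have cop': "coprime d k0" using assms by (simp add: coprime_commute)
      ultimately have "d dvd j" using coprime_dvd_mult_right_iff[OF cop'] by simp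
      hence "d \<le> j" using j by (intro dvd_imp_le) auto
      thus False using j by simp
    qed
    hence "m \<noteq> 0" using j by (simp add: f_def dvd_eq_mod_eq_0)
    moreover have "m < d" using j dpos by (simp add: f_def)
    ultimately show "m \<in> {1..<d}" by simp
  qed
  have inj: "inj_on f {1..<d}"
  proof
    fix j j' assume jj: "j \<in> {1..<d}" "j' \<in> {1..<d}" "f j = f j'"
    hence "[k0 * j = k0 * j'] (mod d)" by (simp add: f_def cong_def)
    hence "[j = j'] (mod d)" using assms by (simp add: cong_mult_lcancel_nat)
    thus "j = j'" using jj by (simp add: cong_def)
  qed
  show ?thesis unfolding f_def[symmetric] bij_betw_def using inj endo_inj_surj[OF _ into inj] by simp
qed

lemma prod_reflect:
  fixes d :: nat
  shows "(\<Prod>j\<in>{1..<d}. g j) = (\<Prod>j\<in>{1..<d}. g (d - j) :: 'b::comm_monoid_mult)"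
  by (rule prod.reindex_bij_witness[of _ "\<lambda>j. d - j" "\<lambda>j. d - j"]) auto

context pl
begin

lemma int_core:
  fixes d t k0 :: nat and x :: int
  assumes dt: "d * t = q" and d2: "d \<ge> 2" and cop: "coprime k0 d"
  shows "[- (\<Sum>a<q. (\<Prod>j\<in>{1..<d}. (-1) ^ a * Iint ((k0 * j) mod d * t) a) * x ^ a) =
          (-1) ^ d * (\<Sum>k<nat p. (\<Prod>j\<in>{1..<d}. (-1) ^ k * int ((j * t) choose k)) * x ^ k)] (mod p)"
proof -
  have tpos: "t \<ge> 1" using dt q_pos by (cases t) auto
  have "d * t \<ge> 2 * 1" by (rule mult_le_mono[OF d2 tpos])
  hence q2: "q \<ge> 2" using dt by simp
  have "1 * t < d * t" using d2 tpos by (intro mult_strict_right_mono) auto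
  hence tq: "t < q" using dt by simp
  have trm: "[(\<Prod>j\<in>{1..<d}. (-1) ^ a * Iint ((k0 * j) mod d * t) a) =
               (-1) ^ (d - 1) * (\<Prod>j\<in>{1..<d}. (-1) ^ a * int ((j * t) choose a))] (mod p)"
    if a: "a < q" for a
  proof -
    define g where "g m = - int ((a + m * t) choose (m * t))" for m
    have "[(\<Prod>j\<in>{1..<d}. (-1) ^ a * Iint ((k0 * j) mod d * t) a) = (\<Prod>j\<in>{1..<d}. g ((k0 * j) mod d))] (mod p)"
    proof (rule cong_prod)
      fix j assume j: "j \<in> {1..<d}"
      have m: "(k0 * j) mod d \<in> {1..<d}" using perm_mult_mod[OF cop] j by (auto simp: bij_betw_def)
      have e1: "1 \<le> (k0 * j) mod d * t" using m tpos by simp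
      have "(k0 * j) mod d * t < d * t" using m tpos by simp
      hence e2: "(k0 * j) mod d * t < q" using dt by simp
      show "[(-1) ^ a * Iint ((k0 * j) mod d * t) a = g ((k0 * j) mod d)] (mod p)"
        using main_term[OF q2 e1 e2 a] by (simp add: Iint_def g_def add.commute)
    qed
    also have "(\<Prod>j\<in>{1..<d}. g ((k0 * j) mod d)) = (\<Prod>j\<in>{1..<d}. g j)"
      by (rule prod.reindex_bij_betw[OF perm_mult_mod[OF cop]])
    also have "\<dots> = (\<Prod>j\<in>{1..<d}. g (d - j))" by (rule prod_reflect)
    finally have c1: "[(\<Prod>j\<in>{1..<d}. (-1) ^ a * Iint ((k0 * j) mod d * t) a) = (\<Prod>j\<in>{1..<d}. g (d - j))] (mod p)" .
    have "[(\<Prod>j\<in>{1..<d}. g (d - j)) = (\<Prod>j\<in>{1..<d}. - ((-1) ^ a * int ((j * t) choose a)))] (mod p)"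
    proof (rule cong_prod)
      fix j assume j: "j \<in> {1..<d}"
      have "j \<le> d" using j by simp
      hence jq: "j * t \<le> q" using dt mult_le_mono1[of j d t] by simp
      have "(d - j) * t = q - j * t" using dt by (simp add: diff_mult_distrib)
      hence "g (d - j) = - int ((a + (q - j * t)) choose a)"
        using binomial_symmetric[of a "a + (q - j * t)"] by (simp add: g_def)
      moreover have "[int ((a + (q - j * t)) choose a) = (-1) ^ a * int ((j * t) choose a)] (mod p)"
        using binom_refl[OF _ jq] a int_q by simp
      ultimately show "[g (d - j) = - ((-1) ^ a * int ((j * t) choose a))] (mod p)"
        by (simp add: cong_minus_minus_iff)
    qed
    moreover have "(\<Prod>j\<in>{1..<d}. - ((-1) ^ a * int ((j * t) choose a))) =
                   (-1) ^ (d - 1) * (\<Prod>j\<in>{1..<d}. (-1) ^ a * int ((j * t) choose a))"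
      by (simp add: prod_uminus)
    ultimately show ?thesis using cong_trans[OF c1] by simp
  qed
  have S1: "[(\<Sum>a<q. (\<Prod>j\<in>{1..<d}. (-1) ^ a * Iint ((k0 * j) mod d * t) a) * x ^ a) =
             (\<Sum>a<q. (-1) ^ (d - 1) * (\<Prod>j\<in>{1..<d}. (-1) ^ a * int ((j * t) choose a)) * x ^ a)] (mod p)"
    by (intro cong_sum cong_mult cong_refl trm) simp
  have S2: "(\<Sum>k<nat p. (\<Prod>j\<in>{1..<d}. (-1) ^ k * int ((j * t) choose k)) * x ^ k) =
            (\<Sum>k<q. (\<Prod>j\<in>{1..<d}. (-1) ^ k * int ((j * t) choose k)) * x ^ k)"
  proof -
    have np: "nat p = Suc q" using int_q by simp
    have "(\<Prod>j\<in>{1..<d}. (-1) ^ q * int ((j * t) choose q)) = 0"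
    proof (rule prod_zero)
      show "finite {1..<d}" by simp
      show "\<exists>j\<in>{1..<d}. (-1) ^ q * int ((j * t) choose q) = 0"
        using d2 tq by (intro bexI[of _ 1]) (auto simp: binomial_eq_0)
    qed
    thus ?thesis unfolding np by simp
  qed
  obtain d' where d': "d = Suc d'" using d2 by (cases d) auto
  have "(-1::int) * (-1) ^ (d - 1) = (-1) ^ d" unfolding d' by simp
  hence sg: "- ((-1::int) ^ (d - 1)) = (-1) ^ d" by simp
  have S3: "- (\<Sum>a<q. (-1) ^ (d - 1) * (\<Prod>j\<in>{1..<d}. (-1) ^ a * int ((j * t) choose a)) * x ^ a) =
             (-1) ^ d * (\<Sum>k<q. (\<Prod>j\<in>{1..<d}. (-1) ^ k * int ((j * t) choose k)) * x ^ k)"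
  proof -
    have "- (\<Sum>a<q. (-1) ^ (d - 1) * (\<Prod>j\<in>{1..<d}. (-1) ^ a * int ((j * t) choose a)) * x ^ a) =
          (\<Sum>a<q. - ((-1) ^ (d - 1) * (\<Prod>j\<in>{1..<d}. (-1) ^ a * int ((j * t) choose a)) * x ^ a))"
      by (rule sum_negf[symmetric])
    also have "\<dots> = (\<Sum>a<q. (-1) ^ d * ((\<Prod>j\<in>{1..<d}. (-1) ^ a * int ((j * t) choose a)) * x ^ a))"
      by (rule sum.cong[OF refl]) (simp only: sg[symmetric] mult_minus_left mult.assoc)
    also have "\<dots> = (-1) ^ d * (\<Sum>k<q. (\<Prod>j\<in>{1..<d}. (-1) ^ k * int ((j * t) choose k)) * x ^ k)"
      by (rule sum_distrib_left[symmetric])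
    finally show ?thesis .
  qed
  have "[- (\<Sum>a<q. (\<Prod>j\<in>{1..<d}. (-1) ^ a * Iint ((k0 * j) mod d * t) a) * x ^ a) =
          - (\<Sum>a<q. (-1) ^ (d - 1) * (\<Prod>j\<in>{1..<d}. (-1) ^ a * int ((j * t) choose a)) * x ^ a)] (mod p)"
    using S1 by (simp only: cong_minus_minus_iff)
  thus ?thesis unfolding S2 S3 .
qed

end


context pl
begin

lemma R_cong_p: assumes "R a n" "R b m" "[n = m] (mod p)" shows "cong_p Zp p a b"
proof -
  obtain c1 where c1: "c1 \<in> Zp" "a - of_int n = of_int p * c1" using assms(1) by (auto simp: R_def)
  obtain c2 where c2: "c2 \<in> Zp" "b - of_int m = of_int p * c2" using assms(2) by (auto simp: R_def)
  obtain r where r: "n - m = p * r" using assms(3) by (metis cong_iff_dvd_diff dvd_def)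
  have "a - b = (a - of_int n) - (b - of_int m) + of_int (n - m)" by simp
  also have "\<dots> = of_int p * (c1 - c2 + of_int r)" using c1 c2 r by (simp add: algebra_simps)
  finally show ?thesis unfolding cong_p_def using c1 c2
    by (intro bexI[of _ "c1 - c2 + of_int r"]) (auto intro: add_in diff_in of_int_in)
qed

lemma triv_mult: "\<chi> \<in> chars p \<Longrightarrow> char_mult (triv_char p) \<chi> = \<chi>"
  by (auto simp: chars_def is_char_def char_mult_def triv_char_def fun_eq_iff)

lemma greene_rewrite:
  fixes T :: "int \<Rightarrow> 'a"
  assumes d2: "d \<ge> 2"
  shows "greene p (char_pow p T t) (map (\<lambda>j. char_pow p T (j * t)) [2..<d]) (replicate (d - 2) (triv_char p)) x
    = of_int p / of_int (p - 1) * (\<Sum>\<chi>\<in>chars p.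
        (\<Prod>j\<in>{1..<d}. gbinom p (char_mult (char_pow p T (j * t)) \<chi>) \<chi>) * \<chi> x)"
  unfolding greene_def
proof (rule arg_cong[where f = "\<lambda>u. _ * u"], rule sum.cong[OF refl])
  fix \<chi> :: "int \<Rightarrow> 'a" assume c: "\<chi> \<in> chars p"
  define f where "f j = gbinom p (char_mult (char_pow p T (j * t)) \<chi>) \<chi>" for j
  have "(\<Prod>i<length (map (\<lambda>j. char_pow p T (j * t)) [2..<d]).
          gbinom p (char_mult (map (\<lambda>j. char_pow p T (j * t)) [2..<d] ! i) \<chi>)
                   (char_mult (replicate (d - 2) (triv_char p) ! i) \<chi>)) = (\<Prod>i<d - 2. f (i + 2))"
    by (rule prod.cong) (auto simp: f_def triv_mult[OF c] add.commute)
  also have "\<dots> = (\<Prod>j\<in>{2..<d}. f j)"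
    by (rule prod.reindex_bij_witness[of _ "\<lambda>j. j - 2" "\<lambda>i. i + 2"]) auto
  finally have P: "(\<Prod>i<length (map (\<lambda>j. char_pow p T (j * t)) [2..<d]).
          gbinom p (char_mult (map (\<lambda>j. char_pow p T (j * t)) [2..<d] ! i) \<chi>)
                   (char_mult (replicate (d - 2) (triv_char p) ! i) \<chi>)) = (\<Prod>j\<in>{2..<d}. f j)" .
  have "{1..<d} = insert 1 {2..<d}" using d2 by auto
  hence "(\<Prod>j\<in>{1..<d}. f j) = f 1 * (\<Prod>j\<in>{2..<d}. f j)" by simp
  thus "gbinom p (char_mult (char_pow p T t) \<chi>) \<chi> *
          (\<Prod>i<length (map (\<lambda>j. char_pow p T (j * t)) [2..<d]).
              gbinom p (char_mult (map (\<lambda>j. char_pow p T (j * t)) [2..<d] ! i) \<chi>)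
                       (char_mult (replicate (d - 2) (triv_char p) ! i) \<chi>)) * \<chi> x =
        (\<Prod>j\<in>{1..<d}. gbinom p (char_mult (char_pow p T (j * t)) \<chi>) \<chi>) * \<chi> x"
    unfolding P by (simp add: f_def)
qed

end


context pl
begin

lemma T_pow_rewrite:
  assumes dt: "d * t = q" and T: "T = char_pow p omega k0"
  shows "char_pow p T (j * t) = char_pow p omega ((k0 * j) mod d * t)"
proof -
  have "char_pow p T (j * t) = char_pow p omega (k0 * (j * t))" unfolding T by (rule char_pow_pow)
  also have "\<dots> = char_pow p omega ((k0 * (j * t)) mod q)" by (rule char_pow_mod[OF omega_char])
  also have "(k0 * (j * t)) mod q = (k0 * j) mod d * t"
    unfolding dt[symmetric] by (simp add: mult.assoc[symmetric] mod_mult_mult2)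
  finally show ?thesis .
qed

lemma lhs_R:
  fixes T :: "int \<Rightarrow> 'a"
  assumes dt: "d * t = q" and d2: "d \<ge> 2" and cop: "coprime k0 d"
    and T: "T = char_pow p omega k0" and gen: "char_generator p T" and x: "\<not> p dvd x"
  shows "R (of_int p ^ (d - 2) * greene p (char_pow p T t) (map (\<lambda>j. char_pow p T (j * t)) [2..<d])
             (replicate (d - 2) (triv_char p)) x)
           (- (\<Sum>a<q. (\<Prod>j\<in>{1..<d}. (-1) ^ a * Iint ((k0 * j) mod d * t) a) * x ^ a))"
proof -
  define gb where "gb \<chi> j = gbinom p (char_mult (char_pow p T (j * t)) \<chi>) \<chi>" for \<chi> j
  define N1 where "N1 = (\<Sum>a<q. (\<Prod>j\<in>{1..<d}. (-1) ^ a * Iint ((k0 * j) mod d * t) a) * x ^ a)"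
  define S' where "S' = (\<Sum>a<q. (\<Prod>j\<in>{1..<d}. gb (char_pow p omega a) j) * char_pow p omega a x)"
  define S where "S = (\<Sum>a<q. (\<Prod>j\<in>{1..<d}. of_int p * gb (char_pow p omega a) j) * char_pow p omega a x)"
  have tpos: "t \<ge> 1" using dt q_pos by (cases t) auto
  have inj: "inj_on (\<lambda>a. char_pow p omega a) {..<q}" by (auto intro!: inj_onI omega_pow_inj)
  have "(\<Sum>\<chi>\<in>chars p. (\<Prod>j\<in>{1..<d}. gb \<chi> j) * \<chi> x) = S'"
    unfolding chars_eq[OF gen] S'_def by (simp add: sum.reindex[OF inj])
  hence L1: "of_int p ^ (d - 2) * greene p (char_pow p T t) (map (\<lambda>j. char_pow p T (j * t)) [2..<d])
             (replicate (d - 2) (triv_char p)) x = of_int p ^ (d - 2) * (of_int p / of_int (p - 1) * S')"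
    using greene_rewrite[OF d2, of T t x] by (simp add: gb_def)
  have "S = (\<Sum>a<q. of_int p ^ (d - 1) * ((\<Prod>j\<in>{1..<d}. gb (char_pow p omega a) j) * char_pow p omega a x))"
    unfolding S_def by (rule sum.cong[OF refl]) (simp add: prod.distrib)
  hence SS: "S = of_int p ^ (d - 1) * S'" by (simp add: S'_def sum_distrib_left)
  have pp: "(of_int p :: 'a) ^ (d - 2) * of_int p = of_int p ^ (d - 1)"
  proof -
    obtain d' where d': "d = Suc (Suc d')" using d2 by (metis add_2_eq_Suc le_Suc_ex)
    show ?thesis unfolding d' by simp
  qed
  have L2: "of_int p ^ (d - 2) * (of_int p / of_int (p - 1) * S') = S / of_int (p - 1)"
    unfolding SS pp[symmetric] by simp
  have RS: "R S N1"
    unfolding S_def N1_def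
  proof (rule R_sum, rule R_mult, rule R_prod)
    fix a j assume a: "a \<in> {..<q}" and j: "j \<in> {1..<d}"
    have m: "(k0 * j) mod d \<in> {1..<d}" using perm_mult_mod[OF cop] j by (auto simp: bij_betw_def)
    have e1: "1 \<le> (k0 * j) mod d * t" using m tpos by simp
    have "(k0 * j) mod d * t < d * t" using m tpos by simp
    hence e2: "(k0 * j) mod d * t < q" using dt by simp
    show "R (of_int p * gb (char_pow p omega a) j) ((-1) ^ a * Iint ((k0 * j) mod d * t) a)"
      unfolding gb_def T_pow_rewrite[OF dt T] using gb_term[OF e1 e2] a by simp
  next
    fix a assume a: "a \<in> {..<q}"
    show "R (char_pow p omega a x) (x ^ a)" using x R_power[OF omega_prop(2)[OF x]] by (simp add: char_pow_def)
  qed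
  have "[N1 = (p - 1) * (- N1)] (mod p)" by (simp add: cong_iff_dvd_diff algebra_simps)
  hence "R S ((p - 1) * (- N1))" using R_cong[OF RS] by blast
  moreover have "\<not> p dvd (p - 1)"
  proof
    assume "p dvd p - 1"
    hence "p dvd p - (p - 1)" using dvd_diff[OF dvd_refl] by blast
    thus False using p_ge2 by (simp add: zdvd_not_zless)
  qed
  ultimately have "R (S / of_int (p - 1)) (- N1)" by (rule R_div)
  thus ?thesis unfolding L1 L2 N1_def .
qed

end


theorem theorem3p3:
  fixes Zp :: "'a::field_char_0 set" and p :: int and d :: nat and t :: nat
    and T :: "int \<Rightarrow> 'a" and x :: int
  assumes "d \<ge> 2"
    and "prime p"
    and "[p = 1] (mod int d)"
    and "t = nat ((p - 1) div int d)"
    and "padic_like p Zp"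
    and "char_generator p T"
    and "\<not> p dvd x"
  shows "cong_p Zp p
     (of_int p ^ (d - 2) *
        greene p (char_pow p T t) (map (\<lambda>j. char_pow p T (j * t)) [2..<d])
          (replicate (d - 2) (triv_char p)) x)
     ((-1) ^ d * hyp_tr (map (\<lambda>j. of_nat j / of_nat d) [1..<d]) (replicate (d - 2) 1)
          (nat p) (of_int x))"
proof -
  interpret pl Zp p by unfold_locales (rule assms(5), rule assms(2))
  have d2: "d \<ge> 2" by (rule assms(1))
  have dvd: "int d dvd p - 1" using assms(3) by (simp add: cong_iff_dvd_diff cong_sym_eq)
  then obtain r where r: "p - 1 = int d * r" by blast
  have r0: "r \<ge> 0" using r p_ge2 d2 by (metis le_less not_le zero_less_mult_pos diff_gt_0_iff_gt less_le_trans one_less_numeral_iff semiring_norm(76) of_nat_0_less_iff zle_diff1_eq zero_le_one le_numeral_extra(1) int_one_le_iff_zero_less order.strict_trans2 zero_less_iff_neq_zero)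
  have "(p - 1) div int d = r" using r d2 by simp
  hence tr: "t = nat r" using assms(4) by simp
  have dt: "d * t = q" using r r0 int_q tr by (metis nat_int nat_mult_distrib of_nat_0_le_iff)
  have tpos: "t \<ge> 1" using dt q_pos by (cases t) auto
  have "d * t \<ge> 2 * 1" by (rule mult_le_mono[OF d2 tpos])
  hence q2: "q \<ge> 2" using dt by simp
  have "d \<le> q" using dt tpos by (metis mult_le_mono2 nat_mult_1_right)
  hence ndp: "\<not> p dvd int d"
  proof -
    assume "d \<le> q"
    hence "int d < p" using int_q by simp
    moreover have "int d > 0" using d2 by simp
    ultimately show ?thesis by (auto simp: zdvd_not_zless)
  qed
  obtain k0 where k0: "k0 < q" "coprime k0 q" "T = char_pow p omega k0"
    using T_omega[OF assms(6) q2] by blast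
  have dq: "d dvd q" unfolding dt[symmetric] by simp
  have cop: "coprime k0 d" using coprime_divisors[OF dvd_refl dq k0(2)] .
  have L: "R (of_int p ^ (d - 2) * greene p (char_pow p T t) (map (\<lambda>j. char_pow p T (j * t)) [2..<d])
             (replicate (d - 2) (triv_char p)) x)
           (- (\<Sum>a<q. (\<Prod>j\<in>{1..<d}. (-1) ^ a * Iint ((k0 * j) mod d * t) a) * x ^ a))"
    by (rule lhs_R[OF dt d2 cop k0(3) assms(6) assms(7)])
  have "R (hyp_tr (map (\<lambda>j. of_nat j / of_nat d) [1..<d]) (replicate (d - 2) 1) (nat p) (of_int x))
          (\<Sum>k<nat p. (\<Prod>j\<in>{1..<d}. (-1) ^ k * int ((j * t) choose k)) * x ^ k)"
    unfolding hyp_tr_def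
  proof (rule R_sum)
    fix k assume "k \<in> {..<nat p}"
    hence kp: "int k < p" by auto
    show "R ((\<Prod>a\<leftarrow>map (\<lambda>j. of_nat j / of_nat d) [1..<d]. pochhammer a k) /
            ((\<Prod>b\<leftarrow>replicate (d - 2) 1. pochhammer b k) * fact k) * (of_int x :: 'a) ^ k)
           ((\<Prod>j\<in>{1..<d}. (-1) ^ k * int ((j * t) choose k)) * x ^ k)"
      by (rule R_hyp_term[OF dt ndp d2 kp])
  qed
  hence RR: "R ((-1) ^ d * hyp_tr (map (\<lambda>j. of_nat j / of_nat d) [1..<d]) (replicate (d - 2) 1) (nat p) (of_int x))
          ((-1) ^ d * (\<Sum>k<nat p. (\<Prod>j\<in>{1..<d}. (-1) ^ k * int ((j * t) choose k)) * x ^ k))"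
    by (intro R_mult R_power) (use R_of_int[of "-1"] in simp)
  show ?thesis by (rule R_cong_p[OF L RR int_core[OF dt d2 cop]])
qed


end
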